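(* Let $A\in\mathbb{R}^{d\times d}$, $N\ge1$, real coefficients $h_{k,j}$ ($1\le k\le N$, $0\le j\le k-1$), and $x_{k+1}=x_k-\sum_{j=0}^k h_{k+1,j}Ax_j$ for $k=0,\dots,N-1$. Then for $k=1,\dots,N$, \[ x_k=\sum_{m=0}^{k}(-1)^mP(k,m)A^mx_0, \] where $P(k,0)=1$ and, for $1\le m\le k$, $P(k,m)=\sum\prod_{\ell=1}^m h_{i(\ell),j(\ell)}$, the sum ranging over all integer sequences $(i(1),j(1)),\dots,(i(m),j(m))$ with $0\le j(\ell)<i(\ell)$ for all $\ell$, $i(\ell)\le j(\ell+1)$ for $\ell=1,\dots,m-1$, and $i(m)\le k$. *)

theory Defs
  imports "HOL-Analysis.Analysis"
begin

text \<open>Matrix power with respect to matrix multiplication (the ring power on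
  vec types is componentwise, so we define it explicitly).\<close>
primrec matrix_pow :: "real^'n^'n \<Rightarrow> nat \<Rightarrow> real^'n^'n" where
  "matrix_pow A 0 = mat 1"
| "matrix_pow A (Suc m) = A ** matrix_pow A m"

text \<open>Admissible index sequences (i(1),j(1)),...,(i(m),j(m)), stored as a list of
  pairs (i,j) (list position l corresponds to index l+1).\<close>
definition P_seqs :: "nat \<Rightarrow> nat \<Rightarrow> (nat \<times> nat) list set" where
  "P_seqs k m = {ps. length ps = m
      \<and> (\<forall>l<m. snd (ps ! l) < fst (ps ! l))
      \<and> (\<forall>l. l + 1 < m \<longrightarrow> fst (ps ! l) \<le> snd (ps ! (l + 1)))
      \<and> fst (ps ! (m - 1)) \<le> k}"

definition P_coef :: "(nat \<Rightarrow> nat \<Rightarrow> real) \<Rightarrow> nat \<Rightarrow> nat \<Rightarrow> real" where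
  "P_coef h k m = (if m = 0 then 1
     else (\<Sum>ps\<in>P_seqs k m. \<Prod>l<m. h (fst (ps ! l)) (snd (ps ! l))))"

end

theory Submission
  imports Defs
begin

definition S_seqs :: "nat \<Rightarrow> nat \<Rightarrow> (nat \<times> nat) list set" where
  "S_seqs j m = (if m = 0 then {[]} else P_seqs j m)"

lemma P_coef_S: "P_coef h k m = (\<Sum>ps\<in>S_seqs k m. \<Prod>l<m. h (fst (ps!l)) (snd (ps!l)))"
  by (simp add: P_coef_def S_seqs_def)

lemma S_len: "ps \<in> S_seqs j m \<Longrightarrow> length ps = m"
  by (auto simp: S_seqs_def P_seqs_def split: if_splits)

lemma P0: "P_seqs 0 (Suc m) = {}"
proof -
  { fix ps assume "ps \<in> P_seqs 0 (Suc m)"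
    then have "snd (ps ! m) < fst (ps ! m)" "fst (ps ! m) \<le> 0" by (auto simp: P_seqs_def)
    then have False by simp }
  then show ?thesis by blast
qed

lemma decomp: "P_seqs (Suc k) (Suc m) = P_seqs k (Suc m) \<union>
   (\<Union>j\<in>{..k}. (\<lambda>ps. ps @ [(Suc k, j)]) ` S_seqs j m)"
proof (intro equalityI subsetI)
  fix ps assume ps: "ps \<in> P_seqs (Suc k) (Suc m)"
  hence len: "length ps = Suc m" and c1: "\<forall>l<Suc m. snd (ps ! l) < fst (ps ! l)"
    and c2: "\<forall>l. l + 1 < Suc m \<longrightarrow> fst (ps ! l) \<le> snd (ps ! (l + 1))"
    and c3: "fst (ps ! m) \<le> Suc k" by (auto simp: P_seqs_def)
  show "ps \<in> P_seqs k (Suc m) \<union> (\<Union>j\<in>{..k}. (\<lambda>ps. ps @ [(Suc k, j)]) ` S_seqs j m)"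
  proof (cases "fst (ps ! m) \<le> k")
    case True
    then show ?thesis using len c1 c2 by (auto simp: P_seqs_def)
  next
    case False
    then have f: "fst (ps ! m) = Suc k" using c3 by simp
    define j where "j = snd (ps ! m)"
    have jk: "j \<le> k" using c1 f j_def by (metis less_Suc_eq_le lessI)
    have pse: "ps = take m ps @ [(Suc k, j)]"
      by (metis len f j_def prod.collapse take_Suc_conv_app_nth lessI take_all_iff order.refl)
    have "take m ps \<in> S_seqs j m"
    proof (cases m)
      case 0 then show ?thesis by (simp add: S_seqs_def)
    next
      case (Suc m')
      have "fst (ps ! m') \<le> j" using c2[rule_format, of m'] Suc j_def by simp
      then show ?thesis using Suc len c1 c2
        by (auto simp: S_seqs_def P_seqs_def)
    qed
    then show ?thesis using jk pse by blast
  qed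
next
  fix ps assume "ps \<in> P_seqs k (Suc m) \<union> (\<Union>j\<in>{..k}. (\<lambda>ps. ps @ [(Suc k, j)]) ` S_seqs j m)"
  then show "ps \<in> P_seqs (Suc k) (Suc m)"
  proof
    assume "ps \<in> P_seqs k (Suc m)" then show ?thesis by (auto simp: P_seqs_def)
  next
    assume "ps \<in> (\<Union>j\<in>{..k}. (\<lambda>ps. ps @ [(Suc k, j)]) ` S_seqs j m)"
    then obtain j qs where jk: "j \<le> k" and qs: "qs \<in> S_seqs j m" and pse: "ps = qs @ [(Suc k, j)]"
      by auto
    have lq: "length qs = m" using S_len qs .
    show ?thesis
    proof (cases m)
      case 0 then show ?thesis using pse lq jk by (auto simp: P_seqs_def)
    next
      case (Suc m')
      then have q: "length qs = m" "\<forall>l<m. snd (qs ! l) < fst (qs ! l)"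
        "\<forall>l. l + 1 < m \<longrightarrow> fst (qs ! l) \<le> snd (qs ! (l + 1))" "fst (qs ! m') \<le> j"
        using qs by (auto simp: S_seqs_def P_seqs_def)
      have A: "\<forall>l<Suc m. snd (ps ! l) < fst (ps ! l)"
        using q jk by (auto simp: pse nth_append less_Suc_eq)
      have B: "\<forall>l. l + 1 < Suc m \<longrightarrow> fst (ps ! l) \<le> snd (ps ! (l + 1))"
      proof (intro allI impI)
        fix l assume l: "l + 1 < Suc m"
        show "fst (ps ! l) \<le> snd (ps ! (l + 1))"
        proof (cases "l + 1 < m")
          case True then show ?thesis using q by (auto simp: pse nth_append)
        next
          case False then have "l = m'" using l Suc by simp
          then show ?thesis using q Suc by (auto simp: pse nth_append)
        qed
      qed
      show ?thesis using A B q by (auto simp: P_seqs_def pse nth_append)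
    qed
  qed
qed

lemma S_fin: "finite (S_seqs k m)"
proof (induction k arbitrary: m rule: less_induct)
  case (less k)
  show ?case
  proof (cases m)
    case 0 then show ?thesis by (simp add: S_seqs_def)
  next
    case (Suc m')
    show ?thesis
    proof (cases k)
      case 0 then show ?thesis using Suc by (simp add: S_seqs_def P0)
    next
      case (Suc k')
      have "finite (P_seqs k' (Suc m'))" using less[of k' "Suc m'"] Suc by (simp add: S_seqs_def)
      moreover have "finite (\<Union>j\<in>{..k'}. (\<lambda>ps. ps @ [(Suc k', j)]) ` S_seqs j m')"
        using less Suc by auto
      ultimately show ?thesis using Suc \<open>m = Suc m'\<close> by (simp add: S_seqs_def decomp)
    qed
  qed
qed

lemma P_rec: "P_coef h (Suc k) (Suc m) = P_coef h k (Suc m) + (\<Sum>j\<le>k. h (Suc k) j * P_coef h j m)"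
proof -
  let ?f = "\<lambda>m ps. \<Prod>l<m. h (fst (ps!l)) (snd (ps!l))"
  let ?B = "\<lambda>j. (\<lambda>ps. ps @ [(Suc k, j)]) ` S_seqs j m"
  have fin1: "finite (P_seqs k (Suc m))" using S_fin[of k "Suc m"] by (simp add: S_seqs_def)
  have finB: "finite (\<Union>j\<in>{..k}. ?B j)" using S_fin by auto
  have disj: "P_seqs k (Suc m) \<inter> (\<Union>j\<in>{..k}. ?B j) = {}"
  proof -
    { fix ps assume a: "ps \<in> P_seqs k (Suc m)" and "ps \<in> (\<Union>j\<in>{..k}. ?B j)"
      then obtain j qs where "qs \<in> S_seqs j m" "ps = qs @ [(Suc k, j)]" by auto
      with S_len have "ps ! m = (Suc k, j)" by (auto simp: nth_append)
      with a have False by (auto simp: P_seqs_def) }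
    then show ?thesis by blast
  qed
  have "P_coef h (Suc k) (Suc m) = sum (?f (Suc m)) (P_seqs (Suc k) (Suc m))"
    by (simp add: P_coef_def)
  also have "\<dots> = sum (?f (Suc m)) (P_seqs k (Suc m)) + sum (?f (Suc m)) (\<Union>j\<in>{..k}. ?B j)"
    unfolding decomp by (rule sum.union_disjoint[OF fin1 finB disj])
  also have "sum (?f (Suc m)) (P_seqs k (Suc m)) = P_coef h k (Suc m)"
    by (simp add: P_coef_def)
  also have "sum (?f (Suc m)) (\<Union>j\<in>{..k}. ?B j) = (\<Sum>j\<le>k. sum (?f (Suc m)) (?B j))"
    by (rule sum.UNION_disjoint) (use S_fin in auto)
  also have "\<dots> = (\<Sum>j\<le>k. h (Suc k) j * P_coef h j m)"
  proof (rule sum.cong[OF refl])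
    fix j assume "j \<in> {..k}"
    have inj: "inj_on (\<lambda>ps. ps @ [(Suc k, j)]) (S_seqs j m)" by (auto simp: inj_on_def)
    have "sum (?f (Suc m)) (?B j) = (\<Sum>ps\<in>S_seqs j m. ?f (Suc m) (ps @ [(Suc k, j)]))"
      by (simp add: sum.reindex[OF inj])
    also have "\<dots> = (\<Sum>ps\<in>S_seqs j m. h (Suc k) j * ?f m ps)"
    proof (rule sum.cong[OF refl])
      fix ps assume "ps \<in> S_seqs j m"
      then have lp: "length ps = m" by (rule S_len)
      have "?f (Suc m) (ps @ [(Suc k, j)]) = (\<Prod>l<m. h (fst ((ps @ [(Suc k, j)])!l)) (snd ((ps @ [(Suc k, j)])!l))) * h (Suc k) j"
        using lp by (simp add: nth_append)
      also have "(\<Prod>l<m. h (fst ((ps @ [(Suc k, j)])!l)) (snd ((ps @ [(Suc k, j)])!l))) = ?f m ps"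
        by (rule prod.cong) (auto simp: nth_append lp)
      finally show "?f (Suc m) (ps @ [(Suc k, j)]) = h (Suc k) j * ?f m ps" by simp
    qed
    also have "\<dots> = h (Suc k) j * P_coef h j m"
      by (simp add: P_coef_S sum_distrib_left)
    finally show "sum (?f (Suc m)) (?B j) = h (Suc k) j * P_coef h j m" .
  qed
  finally show ?thesis .
qed

lemma Pz: "P_coef h k 0 = 1"
  by (simp add: P_coef_def)

lemma P0': "P_coef h 0 (Suc m) = 0"
  by (simp add: P_coef_def P0)

lemma Amul_sum: "(A::real^'d^'d) *v (\<Sum>m<M. c m *\<^sub>R (matrix_pow A m *v v)) =
   (\<Sum>m<M. c m *\<^sub>R (matrix_pow A (Suc m) *v v))"
  by (simp add: linear_sum[OF matrix_vector_mul_linear] matrix_vector_mult_scaleR matrix_vector_mul_assoc)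

lemma main:
  fixes A :: "real^'d^'d" and N :: nat and h :: "nat \<Rightarrow> nat \<Rightarrow> real"
    and x :: "nat \<Rightarrow> real^'d"
  assumes rec: "\<And>k. k < N \<Longrightarrow>
      x (k + 1) = x k - (\<Sum>j\<le>k. h (k + 1) j *\<^sub>R (A *v x j))"
  shows "k \<le> N \<Longrightarrow> k < M \<Longrightarrow> x k = (\<Sum>m<M. ((-1) ^ m * P_coef h k m) *\<^sub>R (matrix_pow A m *v x 0))"
proof (induction k arbitrary: M rule: less_induct)
  case (less k)
  let ?v = "\<lambda>m. matrix_pow A m *v x 0"
  let ?c = "\<lambda>k m. (-1::real) ^ m * P_coef h k m"
  obtain M' where M: "M = Suc M'" using less.prems by (cases M) auto
  show ?case
  proof (cases k)
    case 0
    show ?thesis unfolding M sum.lessThan_Suc_shift using 0 by (simp only: P0' Pz) simp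
  next
    case (Suc k')
    have kM: "k' < M'" using less.prems M Suc by simp
    have xk: "x k' = ?c k' 0 *\<^sub>R ?v 0 + (\<Sum>m<M'. ?c k' (Suc m) *\<^sub>R ?v (Suc m))"
      using less.IH[of k' M] less.prems Suc M by (simp only: sum.lessThan_Suc_shift)
    have xj: "A *v x j = (\<Sum>m<M'. ?c j m *\<^sub>R ?v (Suc m))" if "j \<le> k'" for j
      using less.IH[of j M'] that less.prems Suc kM by (simp add: Amul_sum)
    have "x k = x k' - (\<Sum>j\<le>k'. h (Suc k') j *\<^sub>R (A *v x j))"
      using rec[of k'] less.prems Suc by simp
    also have "(\<Sum>j\<le>k'. h (Suc k') j *\<^sub>R (A *v x j)) =
       (\<Sum>j\<le>k'. h (Suc k') j *\<^sub>R (\<Sum>m<M'. ?c j m *\<^sub>R ?v (Suc m)))"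
      by (rule sum.cong) (auto simp: xj)
    also have "\<dots> = (\<Sum>m<M'. (\<Sum>j\<le>k'. h (Suc k') j * ?c j m) *\<^sub>R ?v (Suc m))"
      by (simp add: scaleR_sum_right scaleR_sum_left sum.swap[of _ "{..k'}"])
    finally have "x k = ?c k' 0 *\<^sub>R ?v 0 + (\<Sum>m<M'. (?c k' (Suc m) - (\<Sum>j\<le>k'. h (Suc k') j * ?c j m)) *\<^sub>R ?v (Suc m))"
      unfolding xk by (simp add: sum_subtractf scaleR_diff_left)
    also have "\<dots> = ?c k 0 *\<^sub>R ?v 0 + (\<Sum>m<M'. ?c k (Suc m) *\<^sub>R ?v (Suc m))"
    proof -
      have "?c k' (Suc m) - (\<Sum>j\<le>k'. h (Suc k') j * ?c j m) = ?c k (Suc m)" for m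
        unfolding Suc P_rec by (simp add: sum_distrib_left algebra_simps sum_negf)
      then show ?thesis by (simp add: Pz)
    qed
    finally show ?thesis unfolding M sum.lessThan_Suc_shift .
  qed
qed

theorem lemmaI2:
  fixes A :: "real^'d^'d" and N :: nat and h :: "nat \<Rightarrow> nat \<Rightarrow> real"
    and x :: "nat \<Rightarrow> real^'d"
  assumes "N \<ge> 1"
    and rec: "\<And>k. k < N \<Longrightarrow>
      x (k + 1) = x k - (\<Sum>j\<le>k. h (k + 1) j *\<^sub>R (A *v x j))"
  shows "\<forall>k\<in>{1..N}. x k = (\<Sum>m\<le>k. ((-1) ^ m * P_coef h k m) *\<^sub>R (matrix_pow A m *v x 0))"
proof
  fix k assume "k \<in> {1..N}"
  then show "x k = (\<Sum>m\<le>k. ((-1) ^ m * P_coef h k m) *\<^sub>R (matrix_pow A m *v x 0))"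
    using main[of N x h A k "Suc k", OF rec] by (simp add: lessThan_Suc_atMost)
qed

end
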